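(* Let $\rho\in\mathbb R$, let $\mathbf a=\{a_n\}_{n\ge1}$ be an admissible sequence of non-negative real numbers, and let $\kappa_{\mathbf a}(s,u)=\sum_{n\ge1}a_nn^{-s-\bar u}$ be the diagonal Dirichlet series kernel on $\mathbb H_\rho\times\mathbb H_\rho$ with reproducing kernel Hilbert space $\mathscr H_{\mathbf a}$; write $\kappa_{\mathbf a,u}=\kappa_{\mathbf a}(\cdot,u)$. Then for every real $\alpha>\rho$, the family $\{\kappa_{\mathbf a,\alpha+ib}:b\in\mathbb R\}$ is a linearly independent total subset of $\mathscr H_{\mathbf a}$.
   Context: $\mathbb H_\rho=\{\Re s>\rho\}$. The diagonal kernel $\kappa_{\mathbf a}$ is assumed convergent on $\mathbb H_\rho\times\mathbb H_\rho$; $\mathscr H_{\mathbf a}$ is the Hilbert space of functions on $\mathbb H_\rho$ with $\kappa_{\mathbf a}(\cdot,t)\in\mathscr H_{\mathbf a}$ and $\langle f,\kappa_{\mathbf a}(\cdot,t)\rangle=f(t)$. A real sequence $\mathbf a$ is admissible if $\mathrm{supp}(\mathbf a)=\{n:a_n\ne0\}$ is an infinite subset of $\mathbb N$ closed under multiplication and contains $p,q\ne1$ with $\gcd(p,q)=1$. Total: the closed linear span is the whole space. *)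

theory Defs
  imports "HOL-Analysis.Analysis"
begin

definition halfplane :: "real \<Rightarrow> complex set" where
  "halfplane \<rho> = {s. Re s > \<rho>}"

text \<open>Support of a sequence a = (a_n)_{n \<ge> 1}; the value a 0 is ignored.\<close>
definition supp_seq :: "(nat \<Rightarrow> real) \<Rightarrow> nat set" where
  "supp_seq a = {n. 1 \<le> n \<and> a n \<noteq> 0}"

definition admissible :: "(nat \<Rightarrow> real) \<Rightarrow> bool" where
  "admissible a \<longleftrightarrow> infinite (supp_seq a) \<and>
     (\<forall>m\<in>supp_seq a. \<forall>n\<in>supp_seq a. m * n \<in> supp_seq a) \<and>
     (\<exists>p\<in>supp_seq a. \<exists>q\<in>supp_seq a. p \<noteq> 1 \<and> q \<noteq> 1 \<and> coprime p q)"

definition dkernel :: "(nat \<Rightarrow> real) \<Rightarrow> complex \<Rightarrow> complex \<Rightarrow> complex" where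
  "dkernel a s u = (\<Sum>n. of_real (a (Suc n)) * of_nat (Suc n) powr (- (s + cnj u)))"

definition kernel_converges :: "real \<Rightarrow> (nat \<Rightarrow> real) \<Rightarrow> bool" where
  "kernel_converges \<rho> a \<longleftrightarrow> (\<forall>s\<in>halfplane \<rho>. \<forall>u\<in>halfplane \<rho>.
      summable (\<lambda>n. of_real (a (Suc n)) * of_nat (Suc n) powr (- (s + cnj u))))"

text \<open>Functions on H_rho are represented as functions complex => complex vanishing
  outside H_rho.  kappa_{a,u} = kappa_a(., u).\<close>
definition kfun :: "real \<Rightarrow> (nat \<Rightarrow> real) \<Rightarrow> complex \<Rightarrow> complex \<Rightarrow> complex" where
  "kfun \<rho> a u = (\<lambda>s. if s \<in> halfplane \<rho> then dkernel a s u else 0)"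

definition ip_norm :: "((complex \<Rightarrow> complex) \<Rightarrow> (complex \<Rightarrow> complex) \<Rightarrow> complex)
    \<Rightarrow> (complex \<Rightarrow> complex) \<Rightarrow> real" where
  "ip_norm ip f = sqrt (Re (ip f f))"

definition hilbert_fun_space :: "real \<Rightarrow> (complex \<Rightarrow> complex) set
    \<Rightarrow> ((complex \<Rightarrow> complex) \<Rightarrow> (complex \<Rightarrow> complex) \<Rightarrow> complex) \<Rightarrow> bool" where
  "hilbert_fun_space \<rho> H ip \<longleftrightarrow>
     (\<forall>f\<in>H. \<forall>s. s \<notin> halfplane \<rho> \<longrightarrow> f s = 0) \<and>
     (\<lambda>_. 0) \<in> H \<and>
     (\<forall>f\<in>H. \<forall>g\<in>H. (\<lambda>s. f s + g s) \<in> H) \<and>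
     (\<forall>f\<in>H. \<forall>c. (\<lambda>s. c * f s) \<in> H) \<and>
     (\<forall>f\<in>H. \<forall>g\<in>H. \<forall>h\<in>H. ip (\<lambda>s. f s + g s) h = ip f h + ip g h) \<and>
     (\<forall>f\<in>H. \<forall>g\<in>H. \<forall>c. ip (\<lambda>s. c * f s) g = c * ip f g) \<and>
     (\<forall>f\<in>H. \<forall>g\<in>H. ip g f = cnj (ip f g)) \<and>
     (\<forall>f\<in>H. Im (ip f f) = 0 \<and> Re (ip f f) \<ge> 0) \<and>
     (\<forall>f\<in>H. ip f f = 0 \<longrightarrow> f = (\<lambda>_. 0)) \<and>
     (\<forall>F. (\<forall>n. F n \<in> H) \<longrightarrow>
          (\<forall>e>0. \<exists>N. \<forall>m\<ge>N. \<forall>n\<ge>N. ip_norm ip (\<lambda>s. F m s - F n s) < e) \<longrightarrow>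
          (\<exists>f\<in>H. (\<lambda>n. ip_norm ip (\<lambda>s. F n s - f s)) \<longlonglongrightarrow> 0))"

definition is_rkhs :: "real \<Rightarrow> (nat \<Rightarrow> real) \<Rightarrow> (complex \<Rightarrow> complex) set
    \<Rightarrow> ((complex \<Rightarrow> complex) \<Rightarrow> (complex \<Rightarrow> complex) \<Rightarrow> complex) \<Rightarrow> bool" where
  "is_rkhs \<rho> a H ip \<longleftrightarrow> hilbert_fun_space \<rho> H ip \<and>
     (\<forall>t\<in>halfplane \<rho>. kfun \<rho> a t \<in> H \<and> (\<forall>f\<in>H. ip f (kfun \<rho> a t) = f t))"

end

theory Submission
  imports Defs "HOL-Complex_Analysis.Complex_Analysis"
begin

lemma cpow: "n > 0 \<Longrightarrow> (of_nat n :: complex) powr z = exp (z * of_real (ln (real n)))"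
  by (simp add: powr_def)
lemma cpow_real: "n > 0 \<Longrightarrow> (of_nat n :: complex) powr (of_real x) = of_real (real n powr x)"
  by (simp add: cpow powr_def flip: exp_of_real of_real_mult)

lemma char_indep:
  fixes x y d :: "'i \<Rightarrow> complex"
  assumes "finite B" "inj_on (\<lambda>b. (x b, y b)) B"
    "\<forall>j k. (\<Sum>b\<in>B. d b * x b ^ j * y b ^ k) = 0"
  shows "\<forall>b\<in>B. d b = 0"
  using assms
proof (induction B arbitrary: d rule: finite_induct)
  case empty
  then show ?case by simp
next
  case (insert b0 B)
  have inj: "inj_on (\<lambda>b. (x b, y b)) B" using insert.prems(1) by (simp add: inj_on_insert)
  have neq: "(x b, y b) \<noteq> (x b0, y b0)" if "b \<in> B" for b
    using insert.prems(1) insert.hyps(2) that by (auto simp: inj_on_def)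
  have Z: "(\<Sum>b\<in>insert b0 B. d b * x b ^ j * y b ^ k) = 0" for j k
    using insert.prems(2) by blast
  have X: "\<forall>b\<in>B. d b * (x b - x b0) = 0"
  proof (rule insert.IH[OF inj], intro allI)
    fix j k
    have "(\<Sum>b\<in>B. d b * (x b - x b0) * x b ^ j * y b ^ k)
        = (\<Sum>b\<in>insert b0 B. d b * (x b - x b0) * x b ^ j * y b ^ k)"
      using insert.hyps by simp
    also have "\<dots> = (\<Sum>b\<in>insert b0 B. d b * x b ^ Suc j * y b ^ k)
                    - x b0 * (\<Sum>b\<in>insert b0 B. d b * x b ^ j * y b ^ k)"
      by (simp add: sum_subtractf sum_distrib_left algebra_simps)
    also have "\<dots> = 0" by (simp only: Z) simp
    finally show "(\<Sum>b\<in>B. d b * (x b - x b0) * x b ^ j * y b ^ k) = 0" .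
  qed
  have Y: "\<forall>b\<in>B. d b * (y b - y b0) = 0"
  proof (rule insert.IH[OF inj], intro allI)
    fix j k
    have "(\<Sum>b\<in>B. d b * (y b - y b0) * x b ^ j * y b ^ k)
        = (\<Sum>b\<in>insert b0 B. d b * (y b - y b0) * x b ^ j * y b ^ k)"
      using insert.hyps by simp
    also have "\<dots> = (\<Sum>b\<in>insert b0 B. d b * x b ^ j * y b ^ Suc k)
                    - y b0 * (\<Sum>b\<in>insert b0 B. d b * x b ^ j * y b ^ k)"
      by (simp add: sum_subtractf sum_distrib_left algebra_simps)
    also have "\<dots> = 0" by (simp only: Z) simp
    finally show "(\<Sum>b\<in>B. d b * (y b - y b0) * x b ^ j * y b ^ k) = 0" .
  qed
  have B0: "\<forall>b\<in>B. d b = 0" using X Y neq by auto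
  have "d b0 = 0" using Z[of 0 0] B0 insert.hyps by simp
  then show ?case using B0 by simp
qed

lemma dir_unique:
  fixes d :: "nat \<Rightarrow> complex" and x0 :: real
  assumes summ: "\<And>x. x > x0 \<Longrightarrow> summable (\<lambda>n. norm (d (Suc n)) * real (Suc n) powr (-x))"
    and zero: "\<And>x. x > x0 \<Longrightarrow> (\<Sum>n. d (Suc n) * of_real (real (Suc n) powr (-x))) = 0"
  shows "m \<ge> 1 \<Longrightarrow> d m = 0"
proof (induction m rule: less_induct)
  case (less m)
  hence prev: "\<And>k. 1 \<le> k \<Longrightarrow> k < m \<Longrightarrow> d k = 0" and m1: "m \<ge> 1" by auto
  define x1 where "x1 = x0 + 1"
  define T where "T = (\<Sum>n. norm (d (Suc (n + m))) * real (Suc (n+m)) powr (-x1))"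
  define r where "r = real m / real (Suc m)"
  have key: "norm (d m) \<le> T * real m powr x1 * r ^ k" for k
  proof -
    define x where "x = x1 + real k"
    have xgt: "x > x0" unfolding x_def x1_def by simp
    define f where "f n = d (Suc n) * of_real (real (Suc n) powr (-x))" for n
    have nf: "norm (f n) = norm (d (Suc n)) * real (Suc n) powr (-x)" for n
      unfolding f_def by (simp add: norm_mult)
    have snf: "summable (\<lambda>n. norm (f n))" unfolding nf using summ[OF xgt] .
    have sf: "summable f" using snf by (rule summable_norm_cancel)
    have f0: "suminf f = 0" using zero[OF xgt] unfolding f_def .
    have split1: "suminf f = (\<Sum>n. f (n + (m - 1))) + sum f {..<m-1}"
      by (rule suminf_split_initial_segment[OF sf])
    have "sum f {..<m-1} = 0"
      by (rule sum.neutral) (use prev in \<open>auto simp: f_def\<close>)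
    with split1 f0 have s2: "(\<Sum>n. f (n + (m - 1))) = 0" by simp
    have sg: "summable (\<lambda>n. f (n + (m - 1)))" using sf by (rule summable_ignore_initial_segment)
    have "(\<Sum>n. f (Suc n + (m - 1))) = (\<Sum>n. f (n + (m - 1))) - f (0 + (m - 1))"
      using suminf_split_head[OF sg] by simp
    also have "(\<lambda>n. f (Suc n + (m - 1))) = (\<lambda>n. f (n + m))" using m1 by (auto intro!: ext)
    finally have fm: "f (m - 1) = - (\<Sum>n. f (n + m))" using s2 by simp
    have snm: "summable (\<lambda>n. norm (f (n + m)))"
      using snf by (rule summable_ignore_initial_segment)
    have sT: "summable (\<lambda>n. norm (d (Suc (n + m))) * real (Suc (n+m)) powr (-x1))"
    proof -
      have "summable (\<lambda>n. norm (d (Suc n)) * real (Suc n) powr (-x1))"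
        using summ[of x1] unfolding x1_def by simp
      then have "summable (\<lambda>n. (\<lambda>n. norm (d (Suc n)) * real (Suc n) powr (-x1)) (n + m))"
        by (rule summable_ignore_initial_segment)
      then show ?thesis by simp
    qed
    have "norm (d m) * real m powr (-x) = norm (f (m - 1))"
      using m1 by (simp add: nf)
    also have "\<dots> = norm (\<Sum>n. f (n + m))" using fm by simp
    also have "\<dots> \<le> (\<Sum>n. norm (f (n + m)))" by (rule summable_norm[OF snm])
    also have "\<dots> \<le> (\<Sum>n. norm (d (Suc (n + m))) * real (Suc (n+m)) powr (-x1) * real (Suc m) powr (- real k))"
    proof (rule suminf_le)
      show "summable (\<lambda>n. norm (d (Suc (n + m))) * real (Suc (n+m)) powr (-x1) * real (Suc m) powr (- real k))"
        using sT by (rule summable_mult2)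
      show "summable (\<lambda>n. norm (f (n + m)))" by (rule snm)
      fix n
      have "real (Suc (n+m)) powr (-x) = real (Suc (n+m)) powr (-x1) * real (Suc (n+m)) powr (- real k)"
        unfolding x_def by (simp add: powr_add[symmetric])
      also have "\<dots> \<le> real (Suc (n+m)) powr (-x1) * real (Suc m) powr (- real k)"
        by (intro mult_left_mono powr_mono2') auto
      finally show "norm (f (n + m)) \<le> norm (d (Suc (n + m))) * real (Suc (n+m)) powr (-x1) * real (Suc m) powr (- real k)"
        unfolding nf by (simp add: mult.assoc mult_left_mono)
    qed
    also have "\<dots> = T * real (Suc m) powr (- real k)"
      unfolding T_def by (rule suminf_mult2[symmetric, OF sT])
    finally have A: "norm (d m) * real m powr (-x) \<le> T * real (Suc m) powr (- real k)" .
    have mpos: "real m > 0" using m1 by simp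
    have "norm (d m) = norm (d m) * real m powr (-x) * real m powr x"
      using mpos by (simp add: powr_minus field_simps)
    also have "\<dots> \<le> T * real (Suc m) powr (- real k) * real m powr x"
      using A by (intro mult_right_mono) auto
    also have "\<dots> = T * real m powr x1 * r ^ k"
      unfolding x_def r_def using mpos
      by (simp add: powr_add powr_minus powr_realpow power_divide field_simps)
    finally show ?thesis .
  qed
  have r0: "0 \<le> r" "r < 1" unfolding r_def by auto
  have "(\<lambda>k. T * real m powr x1 * r ^ k) \<longlonglongrightarrow> T * real m powr x1 * 0"
    by (intro tendsto_mult tendsto_const LIMSEQ_power_zero) (use r0 in auto)
  hence "norm (d m) \<le> 0"
    using key by (intro tendsto_lowerbound[of _ _ sequentially]) (auto intro: always_eventually)
  then show ?case by simp
qed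

lemma exp_eq_imag:
  assumes "exp (\<i> * of_real b * of_real L) = exp (\<i> * of_real b' * of_real L)"
  shows "\<exists>m::int. (b - b') * L = 2 * pi * of_int m"
proof -
  have "exp (\<i> * of_real b * of_real L - \<i> * of_real b' * of_real L) = 1"
    using assms by (simp add: exp_diff)
  then obtain n :: int where "Im (\<i> * of_real b * of_real L - \<i> * of_real b' * of_real L) = of_int (2 * n) * pi"
    unfolding exp_eq_1 by blast
  then have "(b - b') * L = 2 * pi * of_int n" by (simp add: algebra_simps)
  then show ?thesis by blast
qed

lemma no_common_period:
  fixes p q :: nat and t :: real
  assumes p2: "p \<ge> 2" and q2: "q \<ge> 2" and cop: "coprime p q"
    and m1: "t * ln (real p) = 2 * pi * of_int m1" and m2: "t * ln (real q) = 2 * pi * of_int m2"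
  shows "t = 0"
proof (rule ccontr)
  assume t0: "t \<noteq> 0"
  have L1: "ln (real p) > 0" and L2: "ln (real q) > 0" using p2 q2 by auto
  have "of_int m1 * ln (real q) = of_int m2 * ln (real p)"
  proof -
    have "2 * pi * (of_int m1 * ln (real q)) = 2 * pi * (of_int m2 * ln (real p))"
      using m1 m2 by (metis mult.assoc mult.commute)
    then show ?thesis by simp
  qed
  then have eq: "real_of_int \<bar>m1\<bar> * ln (real q) = real_of_int \<bar>m2\<bar> * ln (real p)"
    using L1 L2 by (metis abs_mult abs_of_pos of_int_abs)
  have "m2 \<noteq> 0" using m2 t0 L2 by auto
  define M1 where "M1 = nat \<bar>m1\<bar>"
  define M2 where "M2 = nat \<bar>m2\<bar>"
  have M2pos: "M2 > 0" using \<open>m2 \<noteq> 0\<close> unfolding M2_def by simp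
  have "real M1 * ln (real q) = real M2 * ln (real p)"
    using eq unfolding M1_def M2_def by simp
  then have "ln (real q ^ M1) = ln (real p ^ M2)"
    using p2 q2 by (simp add: ln_realpow)
  then have "real q ^ M1 = real p ^ M2"
    using p2 q2 by (subst (asm) ln_inj_iff) auto
  then have qp: "q ^ M1 = p ^ M2" by (metis of_nat_eq_iff of_nat_power)
  have "coprime (p ^ M2) (q ^ M1)" using cop by simp
  then have "coprime (p ^ M2) (p ^ M2)" using qp by simp
  then have "p ^ M2 = 1" by simp
  then show False using p2 M2pos by simp
qed

lemma supp_pow: "p \<in> supp_seq a \<Longrightarrow> \<forall>m\<in>supp_seq a. \<forall>n\<in>supp_seq a. m * n \<in> supp_seq a
   \<Longrightarrow> p ^ Suc j \<in> supp_seq a"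
  by (induction j) auto

lemma lin_indep:
  fixes \<rho> \<alpha> :: real and a :: "nat \<Rightarrow> real" and c :: "real \<Rightarrow> complex"
  assumes nonneg: "\<forall>n\<ge>1. a n \<ge> 0" and adm: "admissible a" and conv: "kernel_converges \<rho> a"
    and alpha: "\<alpha> > \<rho>"
    and fin: "finite B" and Z: "(\<lambda>s. \<Sum>b\<in>B. c b * kfun \<rho> a (Complex \<alpha> b) s) = (\<lambda>_. 0)"
  shows "\<forall>b\<in>B. c b = 0"
proof -
  define P where "P n = (\<Sum>b\<in>B. c b * exp (\<i> * of_real b * of_real (ln (real n))))" for n
  define d where "d n = of_real (a n) * P n" for n
  define C where "C = (\<Sum>b\<in>B. norm (c b))"
  have normP: "norm (P n) \<le> C" for n
  proof -
    have "norm (P n) \<le> (\<Sum>b\<in>B. norm (c b * exp (\<i> * of_real b * of_real (ln (real n)))))"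
      unfolding P_def by (rule norm_sum)
    also have "\<dots> = C" unfolding C_def by (simp add: norm_mult)
    finally show ?thesis .
  qed
  have realsum: "summable (\<lambda>n. a (Suc n) * real (Suc n) powr (-x))" if "x > \<rho> + \<alpha>" for x
  proof -
    have "of_real (x - \<alpha>) \<in> halfplane \<rho>" "(of_real \<alpha> :: complex) \<in> halfplane \<rho>"
      using that alpha by (auto simp: halfplane_def)
    then have "summable (\<lambda>n. of_real (a (Suc n)) * of_nat (Suc n) powr (- (of_real (x - \<alpha>) + cnj (of_real \<alpha>))) :: complex)"
      using conv unfolding kernel_converges_def by blast
    also have "(\<lambda>n. of_real (a (Suc n)) * of_nat (Suc n) powr (- (of_real (x - \<alpha>) + cnj (of_real \<alpha>))) :: complex)
      = (\<lambda>n. of_real (a (Suc n) * real (Suc n) powr (-x)))"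
    proof
      fix n
      have "- (of_real (x - \<alpha>) + cnj (of_real \<alpha>)) = (of_real (-x) :: complex)" by simp
      then show "of_real (a (Suc n)) * of_nat (Suc n) powr (- (of_real (x - \<alpha>) + cnj (of_real \<alpha>))) =
          (of_real (a (Suc n) * real (Suc n) powr (-x)) :: complex)"
        by (simp only: cpow_real[of "Suc n"]) simp
    qed
    finally show ?thesis by (simp only: summable_of_real_iff)
  qed
  have dz: "d m = 0" if "m \<ge> 1" for m
  proof (rule dir_unique[of "\<rho> + \<alpha>" d, OF _ _ that])
    fix x assume x: "x > \<rho> + \<alpha>"
    show "summable (\<lambda>n. norm (d (Suc n)) * real (Suc n) powr (-x))"
    proof (rule summable_comparison_test[OF _ summable_mult[OF realsum[OF x], of C]])
      show "\<exists>N. \<forall>n\<ge>N. norm (norm (d (Suc n)) * real (Suc n) powr - x) \<le> C * (a (Suc n) * real (Suc n) powr - x)"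
      proof (intro exI allI impI)
        fix n
        have an: "a (Suc n) \<ge> 0" using nonneg by simp
        have "norm (d (Suc n)) \<le> a (Suc n) * C"
          unfolding d_def using an normP[of "Suc n"] by (simp add: norm_mult mult_left_mono)
        then show "norm (norm (d (Suc n)) * real (Suc n) powr - x) \<le> C * (a (Suc n) * real (Suc n) powr - x)"
          by (simp add: mult_right_mono algebra_simps)
      qed
    qed
  next
    fix x assume x: "x > \<rho> + \<alpha>"
    define s :: complex where "s = of_real (x - \<alpha>)"
    have sH: "s \<in> halfplane \<rho>" using x unfolding s_def halfplane_def by simp
    have uH: "Complex \<alpha> b \<in> halfplane \<rho>" for b using alpha unfolding halfplane_def by simp
    define t where "t b n = c b * (of_real (a (Suc n)) * of_nat (Suc n) powr (- (s + cnj (Complex \<alpha> b))))" for b n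
    have sk: "summable (\<lambda>n. of_real (a (Suc n)) * of_nat (Suc n) powr (- (s + cnj (Complex \<alpha> b))))" for b
      using conv sH uH by (auto simp: kernel_converges_def)
    have st: "summable (t b)" for b
      unfolding t_def by (rule summable_mult) (rule sk)
    have "0 = (\<Sum>b\<in>B. c b * kfun \<rho> a (Complex \<alpha> b) s)" using fun_cong[OF Z, of s] by simp
    also have "\<dots> = (\<Sum>b\<in>B. \<Sum>n. t b n)"
      unfolding t_def kfun_def dkernel_def using sH by (simp only: suminf_mult[OF sk] if_True)
    also have "\<dots> = (\<Sum>n. \<Sum>b\<in>B. t b n)" by (rule suminf_sum[symmetric]) (rule st)
    also have "(\<lambda>n. \<Sum>b\<in>B. t b n) = (\<lambda>n. d (Suc n) * of_real (real (Suc n) powr (-x)))"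
    proof
      fix n
      have e: "of_nat (Suc n) powr (- (s + cnj (Complex \<alpha> b))) =
          of_real (real (Suc n) powr (-x)) * exp (\<i> * of_real b * of_real (ln (real (Suc n))))" for b
      proof -
        have "- (s + cnj (Complex \<alpha> b)) = of_real (-x) + \<i> * of_real b"
          unfolding s_def by (simp add: complex_eq_iff)
        define L where "L = ln (real (Suc n))"
        have "of_nat (Suc n) powr (- (s + cnj (Complex \<alpha> b))) = exp ((of_real (-x) + \<i> * of_real b) * of_real L)"
          unfolding L_def by (simp only: cpow[OF zero_less_Suc] \<open>- (s + cnj (Complex \<alpha> b)) = of_real (-x) + \<i> * of_real b\<close>)
        also have "\<dots> = exp (of_real (-x * L)) * exp (\<i> * of_real b * of_real L)"
          by (simp only: exp_add[symmetric]) (simp add: algebra_simps)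
        also have "exp (of_real (-x * L)) = (of_real (real (Suc n) powr (-x)) :: complex)"
          unfolding L_def by (simp add: powr_def exp_of_real[symmetric] mult.commute)
        finally show ?thesis unfolding L_def .
      qed
      show "(\<Sum>b\<in>B. t b n) = d (Suc n) * of_real (real (Suc n) powr (-x))"
        unfolding t_def d_def P_def e by (simp add: sum_distrib_left sum_distrib_right mult_ac)
    qed
    finally show "(\<Sum>n. d (Suc n) * of_real (real (Suc n) powr (-x))) = 0" by simp
  qed
  have Pz: "P m = 0" if "m \<in> supp_seq a" for m
    using dz[of m] that unfolding supp_seq_def d_def by auto
  obtain p q where pq: "p \<in> supp_seq a" "q \<in> supp_seq a" "p \<noteq> 1" "q \<noteq> 1" "coprime p q"
    and mc: "\<forall>m\<in>supp_seq a. \<forall>n\<in>supp_seq a. m * n \<in> supp_seq a"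
    using adm unfolding admissible_def by blast
  have p2: "p \<ge> 2" and q2: "q \<ge> 2" using pq unfolding supp_seq_def by auto
  define x where "x b = exp (\<i> * of_real b * of_real (ln (real p)))" for b
  define y where "y b = exp (\<i> * of_real b * of_real (ln (real q)))" for b
  have Pjk: "P (p ^ Suc j * q ^ Suc k) = (\<Sum>b\<in>B. (c b * x b * y b) * x b ^ j * y b ^ k)" for j k
  proof -
    have "exp (\<i> * of_real b * of_real (ln (real (p ^ Suc j * q ^ Suc k)))) = x b ^ Suc j * y b ^ Suc k" for b
    proof -
      have "ln (real (p ^ Suc j * q ^ Suc k)) = real (Suc j) * ln (real p) + real (Suc k) * ln (real q)"
        using p2 q2 by (simp add: ln_mult ln_realpow algebra_simps)
      then have "exp (\<i> * of_real b * of_real (ln (real (p ^ Suc j * q ^ Suc k))))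
          = exp (of_nat (Suc j) * (\<i> * of_real b * of_real (ln (real p)))) *
            exp (of_nat (Suc k) * (\<i> * of_real b * of_real (ln (real q))))"
        by (simp add: exp_add[symmetric] algebra_simps)
      then show ?thesis unfolding x_def y_def by (simp only: exp_of_nat_mult)
    qed
    then show ?thesis unfolding P_def by (simp add: mult_ac)
  qed
  have inj: "inj_on (\<lambda>b. (x b, y b)) B"
  proof (rule inj_onI)
    fix b b' assume "b \<in> B" "b' \<in> B" "(x b, y b) = (x b', y b')"
    then have "x b = x b'" "y b = y b'" by auto
    then obtain m1 m2 :: int where "(b - b') * ln (real p) = 2 * pi * of_int m1"
      "(b - b') * ln (real q) = 2 * pi * of_int m2"
      unfolding x_def y_def using exp_eq_imag by metis
    then have "b - b' = 0" using no_common_period[OF p2 q2 pq(5)] by blast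
    then show "b = b'" by simp
  qed
  have "\<forall>b\<in>B. c b * x b * y b = 0"
  proof (rule char_indep[OF fin inj], intro allI)
    fix j k
    have "p ^ Suc j * q ^ Suc k \<in> supp_seq a"
      using mc supp_pow[OF pq(1) mc] supp_pow[OF pq(2) mc] by blast
    then show "(\<Sum>b\<in>B. c b * x b * y b * x b ^ j * y b ^ k) = 0" using Pz Pjk[of j k] by metis
  qed
  then show ?thesis unfolding x_def y_def by simp
qed



locale hfs =
  fixes \<rho> :: real and H :: "(complex \<Rightarrow> complex) set"
    and ip :: "(complex \<Rightarrow> complex) \<Rightarrow> (complex \<Rightarrow> complex) \<Rightarrow> complex"
  assumes hfs: "hilbert_fun_space \<rho> H ip"
begin

lemma H_zero: "(\<lambda>_. 0) \<in> H" using hfs unfolding hilbert_fun_space_def by blast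
lemma H_add: "f \<in> H \<Longrightarrow> g \<in> H \<Longrightarrow> (\<lambda>s. f s + g s) \<in> H"
  using hfs unfolding hilbert_fun_space_def by blast
lemma H_smult: "f \<in> H \<Longrightarrow> (\<lambda>s. c * f s) \<in> H"
  using hfs unfolding hilbert_fun_space_def by blast
lemma H_lin: "f \<in> H \<Longrightarrow> g \<in> H \<Longrightarrow> (\<lambda>s. f s + t * g s) \<in> H"
  using H_add H_smult by blast
lemma H_diff: "f \<in> H \<Longrightarrow> g \<in> H \<Longrightarrow> (\<lambda>s. f s - g s) \<in> H"
  using H_lin[of f g "-1"] by simp
lemma H_outside: "f \<in> H \<Longrightarrow> s \<notin> halfplane \<rho> \<Longrightarrow> f s = 0"
  using hfs unfolding hilbert_fun_space_def by blast
lemma ip_add_l: "f \<in> H \<Longrightarrow> g \<in> H \<Longrightarrow> h \<in> H \<Longrightarrow> ip (\<lambda>s. f s + g s) h = ip f h + ip g h"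
  using hfs unfolding hilbert_fun_space_def by blast
lemma ip_smult_l: "f \<in> H \<Longrightarrow> g \<in> H \<Longrightarrow> ip (\<lambda>s. c * f s) g = c * ip f g"
  using hfs unfolding hilbert_fun_space_def by blast
lemma ip_cnj: "f \<in> H \<Longrightarrow> g \<in> H \<Longrightarrow> ip g f = cnj (ip f g)"
  using hfs unfolding hilbert_fun_space_def by blast
lemma ip_pos: "f \<in> H \<Longrightarrow> Im (ip f f) = 0 \<and> Re (ip f f) \<ge> 0"
  using hfs unfolding hilbert_fun_space_def by blast
lemma ip_def0: "f \<in> H \<Longrightarrow> ip f f = 0 \<Longrightarrow> f = (\<lambda>_. 0)"
  using hfs unfolding hilbert_fun_space_def by blast
lemma complete: "(\<forall>n. F n \<in> H) \<Longrightarrow>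
          (\<forall>e>0. \<exists>N. \<forall>m\<ge>N. \<forall>n\<ge>N. ip_norm ip (\<lambda>s. F m s - F n s) < e) \<Longrightarrow>
          (\<exists>f\<in>H. (\<lambda>n. ip_norm ip (\<lambda>s. F n s - f s)) \<longlonglongrightarrow> 0)"
  using hfs unfolding hilbert_fun_space_def by blast

lemma ip_add_r: "f \<in> H \<Longrightarrow> g \<in> H \<Longrightarrow> h \<in> H \<Longrightarrow> ip h (\<lambda>s. f s + g s) = ip h f + ip h g"
proof -
  assume f: "f \<in> H" and g: "g \<in> H" and h: "h \<in> H"
  have "ip h (\<lambda>s. f s + g s) = cnj (ip (\<lambda>s. f s + g s) h)" by (rule ip_cnj[OF H_add[OF f g] h])
  also have "\<dots> = cnj (ip f h) + cnj (ip g h)" by (simp add: ip_add_l[OF f g h])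
  finally show ?thesis using ip_cnj[OF h f] ip_cnj[OF h g] by simp
qed
lemma ip_smult_r: "f \<in> H \<Longrightarrow> g \<in> H \<Longrightarrow> ip f (\<lambda>s. c * g s) = cnj c * ip f g"
proof -
  assume f: "f \<in> H" and g: "g \<in> H"
  have "ip f (\<lambda>s. c * g s) = cnj (ip (\<lambda>s. c * g s) f)" by (rule ip_cnj[OF H_smult[OF g] f])
  also have "\<dots> = cnj c * cnj (ip g f)" by (simp add: ip_smult_l[OF g f])
  finally show ?thesis using ip_cnj[OF f g] by simp
qed
lemma ip_zero_l: "g \<in> H \<Longrightarrow> ip (\<lambda>_. 0) g = 0"
  using ip_smult_l[OF H_zero, of g 0] by simp
lemma ip_zero_r: "g \<in> H \<Longrightarrow> ip g (\<lambda>_. 0) = 0"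
  using ip_cnj[OF H_zero, of g] ip_zero_l by simp
lemma ip_self: "f \<in> H \<Longrightarrow> ip f f = of_real (Re (ip f f))"
  using ip_pos[of f] by (simp add: complex_eq_iff)

lemma expand:
  assumes f: "f \<in> H" and g: "g \<in> H"
  shows "Re (ip (\<lambda>s. f s + t * g s) (\<lambda>s. f s + t * g s))
       = Re (ip f f) + 2 * Re (cnj t * ip f g) + (cmod t)^2 * Re (ip g g)"
proof -
  have tg: "(\<lambda>s. t * g s) \<in> H" using H_smult[OF g] .
  have fg: "(\<lambda>s. f s + t * g s) \<in> H" using H_lin[OF f g] .
  have "ip (\<lambda>s. f s + t * g s) (\<lambda>s. f s + t * g s)
     = ip f (\<lambda>s. f s + t * g s) + t * ip g (\<lambda>s. f s + t * g s)"
    using ip_add_l[OF f tg fg] ip_smult_l[OF g fg] by simp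
  also have "\<dots> = ip f f + cnj t * ip f g + t * (ip g f + cnj t * ip g g)"
    using ip_add_r[OF f tg f] ip_add_r[OF f tg g] ip_smult_r[OF f g] ip_smult_r[OF g g] by simp
  finally have e: "ip (\<lambda>s. f s + t * g s) (\<lambda>s. f s + t * g s) = ip f f + cnj t * ip f g + t * (ip g f + cnj t * ip g g)" .
  have "Re (t * ip g f) = Re (cnj t * ip f g)"
    using ip_cnj[OF f g] by simp
  moreover have "t * (cnj t * ip g g) = of_real ((cmod t)^2 * Re (ip g g))"
  proof -
    have "t * (cnj t * ip g g) = (t * cnj t) * of_real (Re (ip g g))"
      using ip_self[OF g] by (simp only: mult.assoc)
    then show ?thesis by (simp only: complex_norm_square[symmetric] of_real_mult)
  qed
  ultimately show ?thesis unfolding e by (simp add: distrib_left)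
qed

lemma ipn_sq: assumes "f \<in> H" shows "(ip_norm ip f)^2 = Re (ip f f)"
  unfolding ip_norm_def using ip_pos[OF assms] by simp
lemma ipn_nonneg: "f \<in> H \<Longrightarrow> ip_norm ip f \<ge> 0" unfolding ip_norm_def using ip_pos by simp
lemma ipn_zero_iff: "f \<in> H \<Longrightarrow> ip_norm ip f = 0 \<longleftrightarrow> f = (\<lambda>_. 0)"
proof
  assume f: "f \<in> H" and "ip_norm ip f = 0"
  then have "Re (ip f f) = 0" using ipn_sq[OF f] by simp
  then have "ip f f = 0" using ip_self[OF f] by simp
  then show "f = (\<lambda>_. 0)" using ip_def0 f by blast
next
  assume "f = (\<lambda>_. 0)" then show "ip_norm ip f = 0" using ip_zero_l[OF H_zero] unfolding ip_norm_def by simp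
qed

lemma CS:
  assumes f: "f \<in> H" and g: "g \<in> H"
  shows "cmod (ip f g) \<le> ip_norm ip f * ip_norm ip g"
proof (cases "Re (ip g g) = 0")
  case True
  then have "ip g g = 0" using ip_self[OF g] by simp
  then have "g = (\<lambda>_. 0)" using ip_def0 g by blast
  then show ?thesis using ip_zero_r[OF f] ipn_nonneg[OF f] ipn_nonneg[OF g] by simp
next
  case False
  define G where "G = Re (ip g g)"
  define F where "F = Re (ip f f)"
  define z where "z = ip f g"
  have Gpos: "G > 0" using False ip_pos[OF g] unfolding G_def by simp
  define t where "t = - z / of_real G"
  have "0 \<le> Re (ip (\<lambda>s. f s + t * g s) (\<lambda>s. f s + t * g s))"
    using ip_pos[OF H_lin[OF f g]] by simp
  also have "\<dots> = F + 2 * Re (cnj t * z) + (cmod t)^2 * G"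
    unfolding F_def G_def z_def by (rule expand[OF f g])
  also have "Re (cnj t * z) = - ((cmod z)^2 / G)"
    unfolding t_def cmod_power2 by (simp add: power2_eq_square add_divide_distrib diff_divide_distrib)
  also have "(cmod t)^2 * G = (cmod z)^2 / G"
    unfolding t_def using Gpos by (simp add: norm_divide power2_eq_square)
  finally have "(cmod z)^2 / G \<le> F" by simp
  then have "(cmod z)^2 \<le> F * G" using Gpos by (simp add: divide_le_eq)
  also have "F * G = (ip_norm ip f * ip_norm ip g)^2"
    unfolding F_def G_def by (simp add: power_mult_distrib ipn_sq f g)
  finally show ?thesis unfolding z_def
    by (rule power2_le_imp_le) (simp add: ipn_nonneg f g)
qed

lemma tri: "f \<in> H \<Longrightarrow> g \<in> H \<Longrightarrow> ip_norm ip (\<lambda>s. f s + g s) \<le> ip_norm ip f + ip_norm ip g"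
proof -
  assume f: "f \<in> H" and g: "g \<in> H"
  have "(ip_norm ip (\<lambda>s. f s + g s))^2 = Re (ip f f) + 2 * Re (ip f g) + Re (ip g g)"
    using ipn_sq[OF H_add[OF f g]] expand[OF f g, of 1] by simp
  also have "\<dots> \<le> Re (ip f f) + 2 * (ip_norm ip f * ip_norm ip g) + Re (ip g g)"
    using CS[OF f g] complex_Re_le_cmod[of "ip f g"] by simp
  also have "\<dots> = (ip_norm ip f + ip_norm ip g)^2"
    by (simp add: power2_sum ipn_sq f g)
  finally show ?thesis by (rule power2_le_imp_le) (simp add: ipn_nonneg f g add_nonneg_nonneg)
qed

lemma ipn_smult: "f \<in> H \<Longrightarrow> ip_norm ip (\<lambda>s. c * f s) = cmod c * ip_norm ip f"
proof -
  assume f: "f \<in> H"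
  have "ip (\<lambda>s. c * f s) (\<lambda>s. c * f s) = c * (cnj c * ip f f)"
    using ip_smult_l[OF f H_smult[OF f]] ip_smult_r[OF f f] by simp
  also have "\<dots> = (c * cnj c) * of_real (Re (ip f f))"
    using ip_self[OF f] by (simp only: mult.assoc)
  also have "\<dots> = of_real ((cmod c)^2 * Re (ip f f))"
    by (simp only: complex_norm_square[symmetric] of_real_mult)
  finally show ?thesis unfolding ip_norm_def by (simp only: Re_complex_of_real real_sqrt_mult real_sqrt_abs norm_ge_zero abs_norm_cancel)
qed

lemma ipn_sym: assumes u: "u \<in> H" and w: "w \<in> H"
  shows "ip_norm ip (\<lambda>s. u s - w s) = ip_norm ip (\<lambda>s. w s - u s)"
proof -
  have e: "(\<lambda>s. w s - u s) = (\<lambda>s. (-1) * (u s - w s))" by (rule ext) simp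
  show ?thesis unfolding e ipn_smult[OF H_diff[OF u w]] by simp
qed

lemma tri_diff: assumes u: "u \<in> H" and v: "v \<in> H" and w: "w \<in> H"
  shows "ip_norm ip (\<lambda>s. u s - w s) \<le> ip_norm ip (\<lambda>s. u s - v s) + ip_norm ip (\<lambda>s. v s - w s)"
proof -
  have e: "(\<lambda>s. u s - w s) = (\<lambda>s. (u s - v s) + (v s - w s))" by (rule ext) simp
  show ?thesis unfolding e by (rule tri[OF H_diff[OF u v] H_diff[OF v w]])
qed

lemma sumK_H: assumes KH: "\<And>i. K i \<in> H" and fin: "finite B" shows "(\<lambda>s. \<Sum>b\<in>B. c b * K b s) \<in> H"
  using fin
proof (induction B rule: finite_induct)
  case empty then show ?case using H_zero by simp
next
  case (insert x F)
  have "(\<lambda>s. \<Sum>b\<in>insert x F. c b * K b s) = (\<lambda>s. c x * K x s + (\<Sum>b\<in>F. c b * K b s))"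
    using insert.hyps by simp
  then show ?case using H_add[OF H_smult[OF KH] insert.IH] by simp
qed

lemma aux_lin: fixes a b c z w :: real assumes "a \<le> 2*b + 2*c - 4*z" "b \<le> w" "c \<le> w" shows "a \<le> 4*(w - z)"
  using assms by argo

lemma proj:
  fixes K :: "'i \<Rightarrow> complex \<Rightarrow> complex"
  assumes KH: "\<And>i. K i \<in> H" and f: "f \<in> H" and e: "e > 0"
    and far: "\<And>B c. finite B \<Longrightarrow> e \<le> ip_norm ip (\<lambda>s. f s - (\<Sum>b\<in>B. c b * K b s))"
  shows "\<exists>h\<in>H. h \<noteq> (\<lambda>_. 0) \<and> (\<forall>i. ip h (K i) = 0)"
proof -
  define V where "V = {(\<lambda>s. \<Sum>b\<in>B. c b * K b s) | B c. finite B}"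
  define D where "D g = ip_norm ip (\<lambda>s. f s - g s)" for g
  have Vobt: "\<exists>B c. g = (\<lambda>s. \<Sum>b\<in>B. c b * K b s) \<and> finite B" if "g \<in> V" for g
    using that unfolding V_def by (simp only: mem_Collect_eq)
  have VH: "g \<in> H" if gV: "g \<in> V" for g
  proof -
    obtain B c where "g = (\<lambda>s. \<Sum>b\<in>B. c b * K b s)" "finite B" using Vobt[OF gV] by blast
    then show ?thesis using sumK_H[OF KH] by simp
  qed
  have Vfar: "e \<le> D g" if gV: "g \<in> V" for g
  proof -
    obtain B c where "g = (\<lambda>s. \<Sum>b\<in>B. c b * K b s)" "finite B" using Vobt[OF gV] by blast
    then show ?thesis unfolding D_def using far by simp
  qed
  have Vin: "(\<lambda>s. \<Sum>b\<in>B. c b * K b s) \<in> V" if "finite B" for B c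
    unfolding V_def using that by blast
  have Vlin: "(\<lambda>s. x * u s + y * w s) \<in> V" if "u \<in> V" "w \<in> V" for u w x y
  proof -
    obtain B1 c1 where u: "u = (\<lambda>s. \<Sum>b\<in>B1. c1 b * K b s)" "finite B1" using Vobt[OF \<open>u \<in> V\<close>] by blast
    obtain B2 c2 where w: "w = (\<lambda>s. \<Sum>b\<in>B2. c2 b * K b s)" "finite B2" using Vobt[OF \<open>w \<in> V\<close>] by blast
    define c where "c b = x * (if b \<in> B1 then c1 b else 0) + y * (if b \<in> B2 then c2 b else 0)" for b
    have fin: "finite (B1 \<union> B2)" using u w by simp
    have "(\<lambda>s. x * u s + y * w s) = (\<lambda>s. \<Sum>b\<in>B1 \<union> B2. c b * K b s)"
    proof
      fix s
      have 1: "(\<Sum>b\<in>B1 \<union> B2. (if b \<in> B1 then c1 b * K b s else 0)) = (\<Sum>b\<in>B1. c1 b * K b s)"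
      proof -
        have "(B1 \<union> B2) \<inter> B1 = B1" by blast
        then show ?thesis using sum.inter_restrict[OF fin, of "\<lambda>b. c1 b * K b s" B1] by simp
      qed
      have 2: "(\<Sum>b\<in>B1 \<union> B2. (if b \<in> B2 then c2 b * K b s else 0)) = (\<Sum>b\<in>B2. c2 b * K b s)"
      proof -
        have "(B1 \<union> B2) \<inter> B2 = B2" by blast
        then show ?thesis using sum.inter_restrict[OF fin, of "\<lambda>b. c2 b * K b s" B2] by simp
      qed
      have "(\<Sum>b\<in>B1 \<union> B2. c b * K b s) = x * (\<Sum>b\<in>B1 \<union> B2. (if b \<in> B1 then c1 b * K b s else 0))
          + y * (\<Sum>b\<in>B1 \<union> B2. (if b \<in> B2 then c2 b * K b s else 0))"
      proof -
        have "(\<Sum>b\<in>B1 \<union> B2. c b * K b s) = (\<Sum>b\<in>B1 \<union> B2. x * (if b \<in> B1 then c1 b * K b s else 0)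
            + y * (if b \<in> B2 then c2 b * K b s else 0))"
          by (rule sum.cong) (auto simp: c_def algebra_simps)
        then show ?thesis by (simp only: sum.distrib sum_distrib_left)
      qed
      then show "x * u s + y * w s = (\<Sum>b\<in>B1 \<union> B2. c b * K b s)" using 1 2 u w by simp
    qed
    then show ?thesis using Vin[OF fin] by simp
  qed
  have V0: "(\<lambda>_. 0) \<in> V" using Vin[of "{}"] by simp
  have VK: "K i \<in> V" for i
  proof -
    have "K i = (\<lambda>s. \<Sum>b\<in>{i}. (\<lambda>_. 1) b * K b s)" by simp
    then show ?thesis using Vin[of "{i}" "\<lambda>_. 1"] by simp
  qed
  define d where "d = Inf (D ` V)"
  have bdd: "bdd_below (D ` V)" using Vfar by (meson bdd_belowI2)
  have ne: "D ` V \<noteq> {}" using V0 by blast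
  have d_le: "d \<le> D g" if "g \<in> V" for g unfolding d_def using bdd that by (simp add: cInf_lower)
  have d_ge: "e \<le> d" unfolding d_def using ne Vfar by (simp add: le_cInf_iff[OF ne bdd])
  have d0: "d > 0" using d_ge e by simp
  have ex: "\<forall>n. \<exists>g. g \<in> V \<and> D g < d + inverse (real (Suc n))"
  proof
    fix n
    have "Inf (D ` V) < d + inverse (real (Suc n))" unfolding d_def by simp
    then show "\<exists>g. g \<in> V \<and> D g < d + inverse (real (Suc n))" using cInf_less_iff[OF ne bdd] by blast
  qed
  obtain G where G0: "\<forall>n. G n \<in> V \<and> D (G n) < d + inverse (real (Suc n))"
    using choice[OF ex] by blast
  have G: "\<And>n. G n \<in> V" "\<And>n. D (G n) < d + inverse (real (Suc n))" using G0 by auto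
  have GH: "G n \<in> H" for n using VH G by blast
  have par: "(ip_norm ip (\<lambda>s. G m s - G n s))^2 \<le> 2 * (D (G m))^2 + 2 * (D (G n))^2 - 4 * d^2" for m n
  proof -
    define u where "u = (\<lambda>s. f s - G m s)"
    define v where "v = (\<lambda>s. f s - G n s)"
    have uH: "u \<in> H" and vH: "v \<in> H" unfolding u_def v_def using H_diff f GH by auto
    define w where "w = (\<lambda>s. (1/2) * G m s + (1/2) * G n s)"
    have wV: "w \<in> V" unfolding w_def using Vlin G by blast
    have e1: "(\<lambda>s. u s + 1 * v s) = (\<lambda>s. 2 * (f s - w s))" unfolding u_def v_def w_def by (rule ext) (simp add: algebra_simps)
    have e2: "(\<lambda>s. u s + (-1) * v s) = (\<lambda>s. G n s - G m s)" unfolding u_def v_def by (rule ext) (simp add: algebra_simps)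
    have "Re (ip (\<lambda>s. u s + 1 * v s) (\<lambda>s. u s + 1 * v s)) + Re (ip (\<lambda>s. u s + (-1) * v s) (\<lambda>s. u s + (-1) * v s))
        = 2 * Re (ip u u) + 2 * Re (ip v v)"
      using expand[OF uH vH, of 1] expand[OF uH vH, of "-1"] by simp
    moreover have "Re (ip (\<lambda>s. u s + 1 * v s) (\<lambda>s. u s + 1 * v s)) = 4 * (D w)^2"
    proof -
      have "Re (ip (\<lambda>s. u s + 1 * v s) (\<lambda>s. u s + 1 * v s)) = (ip_norm ip (\<lambda>s. u s + 1 * v s))^2"
        by (rule sym[OF ipn_sq[OF H_lin[OF uH vH]]])
      also have "\<dots> = (2 * D w)^2" unfolding e1 D_def using ipn_smult[OF H_diff[OF f VH[OF wV]], of 2] by simp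
      finally show ?thesis by simp
    qed
    moreover have "Re (ip (\<lambda>s. u s + (-1) * v s) (\<lambda>s. u s + (-1) * v s)) = (ip_norm ip (\<lambda>s. G m s - G n s))^2"
      using ipn_sq[OF H_lin[OF uH vH, of "-1"]] unfolding e2 using ipn_sym[OF GH GH, of m n] by simp
    moreover have "Re (ip u u) = (D (G m))^2" "Re (ip v v) = (D (G n))^2"
      unfolding D_def u_def v_def using ipn_sq H_diff f GH by auto
    moreover have "d^2 \<le> (D w)^2" using d_le[OF wV] d0 by (simp add: power_mono)
    ultimately show ?thesis by linarith
  qed
  have Dnn: "D g \<ge> 0" if "g \<in> V" for g using Vfar[OF that] e by simp
  have cauchy: "\<forall>\<epsilon>>0. \<exists>N. \<forall>m\<ge>N. \<forall>n\<ge>N. ip_norm ip (\<lambda>s. G m s - G n s) < \<epsilon>"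
  proof (intro allI impI)
    fix \<epsilon> :: real assume \<epsilon>: "\<epsilon> > 0"
    have "\<epsilon>^2 / (4 * (2 * d + 1)) > 0" using \<epsilon> d0 by simp
    then obtain N where N: "inverse (real (Suc N)) < \<epsilon>^2 / (4 * (2 * d + 1))" using reals_Archimedean by blast
    define \<delta> where "\<delta> = inverse (real (Suc N))"
    have \<delta>0: "\<delta> > 0" "\<delta> \<le> 1" unfolding \<delta>_def by (auto simp: field_simps)
    have bnd: "D (G m) < d + \<delta>" if "m \<ge> N" for m
    proof -
      have "inverse (real (Suc m)) \<le> \<delta>" unfolding \<delta>_def using that by (simp add: field_simps)
      then show ?thesis using G(2)[of m] by simp
    qed
    show "\<exists>N. \<forall>m\<ge>N. \<forall>n\<ge>N. ip_norm ip (\<lambda>s. G m s - G n s) < \<epsilon>"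
    proof (intro exI allI impI)
      fix m n assume m: "m \<ge> N" and n: "n \<ge> N"
      have sq: "(D (G k))^2 \<le> (d + \<delta>)^2" if "k \<ge> N" for k
        using bnd[OF that] Dnn[OF G(1)] by (intro power_mono) auto
      have "(ip_norm ip (\<lambda>s. G m s - G n s))^2 \<le> 4 * ((d + \<delta>)^2 - d^2)"
        using aux_lin[OF par[of m n] sq[OF m] sq[OF n]] .
      also have "\<dots> = 4 * \<delta> * (2 * d + \<delta>)" by (simp add: power2_eq_square algebra_simps)
      also have "\<dots> \<le> 4 * \<delta> * (2 * d + 1)" using \<delta>0 by (intro mult_left_mono) auto
      also have "\<dots> < \<epsilon>^2" using N d0 unfolding \<delta>_def by (simp add: field_simps)
      finally show "ip_norm ip (\<lambda>s. G m s - G n s) < \<epsilon>"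
        by (rule power_less_imp_less_base) (use \<epsilon> in simp)
    qed
  qed
  obtain g where gH: "g \<in> H" and lim: "(\<lambda>n. ip_norm ip (\<lambda>s. G n s - g s)) \<longlonglongrightarrow> 0"
    using complete[of G] GH cauchy by blast
  define r where "r n = ip_norm ip (\<lambda>s. G n s - g s)" for n
  have r: "r \<longlonglongrightarrow> 0" using lim unfolding r_def .
  define h where "h = (\<lambda>s. f s - g s)"
  have hH: "h \<in> H" unfolding h_def using H_diff f gH by simp
  have inv0: "(\<lambda>n. inverse (real (Suc n))) \<longlonglongrightarrow> 0" by (rule LIMSEQ_inverse_real_of_nat)
  have lower: "d \<le> ip_norm ip h"
  proof (rule LIMSEQ_le_const)
    show "(\<lambda>n. ip_norm ip h + r n) \<longlonglongrightarrow> ip_norm ip h" using tendsto_add[OF tendsto_const r] by simp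
    show "\<exists>N. \<forall>n\<ge>N. d \<le> ip_norm ip h + r n"
    proof (intro exI allI impI)
      fix n
      have "d \<le> D (G n)" using d_le G by blast
      also have "\<dots> \<le> ip_norm ip h + ip_norm ip (\<lambda>s. g s - G n s)"
        unfolding D_def h_def by (rule tri_diff[OF f gH GH])
      also have "\<dots> = ip_norm ip h + r n" unfolding r_def using ipn_sym[OF gH GH] by simp
      finally show "d \<le> ip_norm ip h + r n" .
    qed
  qed
  have upper: "ip_norm ip h \<le> d"
  proof (rule LIMSEQ_le_const)
    show "(\<lambda>n. d + inverse (real (Suc n)) + r n) \<longlonglongrightarrow> d"
      using tendsto_add[OF tendsto_add[OF tendsto_const inv0] r] by simp
    show "\<exists>N. \<forall>n\<ge>N. ip_norm ip h \<le> d + inverse (real (Suc n)) + r n"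
    proof (intro exI allI impI)
      fix n
      have "ip_norm ip h \<le> D (G n) + r n"
        unfolding D_def h_def r_def by (rule tri_diff[OF f GH gH])
      then show "ip_norm ip h \<le> d + inverse (real (Suc n)) + r n" using G(2)[of n] by simp
    qed
  qed
  have ortho_norm: "d \<le> ip_norm ip (\<lambda>s. h s + t * K i s)" for t i
  proof (rule LIMSEQ_le_const)
    show "(\<lambda>n. ip_norm ip (\<lambda>s. h s + t * K i s) + r n) \<longlonglongrightarrow> ip_norm ip (\<lambda>s. h s + t * K i s)"
      using tendsto_add[OF tendsto_const r] by simp
    show "\<exists>N. \<forall>n\<ge>N. d \<le> ip_norm ip (\<lambda>s. h s + t * K i s) + r n"
    proof (intro exI allI impI)
      fix n
      define v where "v = (\<lambda>s. g s + (-t) * K i s)"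
      define w where "w = (\<lambda>s. 1 * G n s + (-t) * K i s)"
      have vH: "v \<in> H" unfolding v_def by (rule H_lin[OF gH KH])
      have wV: "w \<in> V" unfolding w_def by (rule Vlin[OF G(1) VK])
      have e1: "(\<lambda>s. f s - v s) = (\<lambda>s. h s + t * K i s)" unfolding v_def h_def by (rule ext) simp
      have e2: "(\<lambda>s. v s - w s) = (\<lambda>s. g s - G n s)" unfolding v_def w_def by (rule ext) simp
      have "d \<le> D w" using d_le[OF wV] .
      also have "\<dots> \<le> ip_norm ip (\<lambda>s. f s - v s) + ip_norm ip (\<lambda>s. v s - w s)"
        unfolding D_def by (rule tri_diff[OF f vH VH[OF wV]])
      also have "\<dots> = ip_norm ip (\<lambda>s. h s + t * K i s) + r n"
        unfolding e1 e2 r_def using ipn_sym[OF gH GH] by simp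
      finally show "d \<le> ip_norm ip (\<lambda>s. h s + t * K i s) + r n" .
    qed
  qed
  have orth: "ip h (K i) = 0" for i
  proof -
    define z where "z = ip h (K i)"
    define NK where "NK = Re (ip (K i) (K i))"
    have NK0: "NK \<ge> 0" unfolding NK_def using ip_pos[OF KH] by simp
    define \<epsilon> where "\<epsilon> = inverse (NK + 1)"
    have \<epsilon>0: "\<epsilon> > 0" unfolding \<epsilon>_def using NK0 by simp
    have \<epsilon>NK: "\<epsilon> * NK \<le> 1" unfolding \<epsilon>_def using NK0 by (simp add: field_simps)
    define t where "t = - of_real \<epsilon> * z"
    have "d^2 \<le> (ip_norm ip (\<lambda>s. h s + t * K i s))^2"
      using ortho_norm[of t i] d0 by (simp add: power_mono)
    also have "\<dots> = Re (ip h h) + 2 * Re (cnj t * z) + (cmod t)^2 * NK"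
      unfolding z_def NK_def using ipn_sq[OF H_lin[OF hH KH]] expand[OF hH KH] by simp
    also have "Re (cnj t * z) = - \<epsilon> * (cmod z)^2"
      unfolding t_def cmod_power2 by (simp add: algebra_simps power2_eq_square)
    also have "(cmod t)^2 = \<epsilon>^2 * (cmod z)^2"
      unfolding t_def using \<epsilon>0 by (simp add: norm_mult power_mult_distrib)
    also have "Re (ip h h) = (ip_norm ip h)^2" using ipn_sq[OF hH] by simp
    finally have A: "d^2 \<le> (ip_norm ip h)^2 - 2 * \<epsilon> * (cmod z)^2 + \<epsilon>^2 * (cmod z)^2 * NK" by simp
    have "(ip_norm ip h)^2 \<le> d^2" using upper ipn_nonneg[OF hH] by (simp add: power_mono)
    with A have B: "0 \<le> \<epsilon> * (cmod z)^2 * (\<epsilon> * NK - 2)" by (simp add: algebra_simps power2_eq_square)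
    have "\<epsilon> * (cmod z)^2 * (\<epsilon> * NK - 2) \<le> \<epsilon> * (cmod z)^2 * (-1)"
      using \<epsilon>NK \<epsilon>0 by (intro mult_left_mono) auto
    with B have "\<epsilon> * (cmod z)^2 \<le> 0" by simp
    then have "(cmod z)^2 \<le> 0" using \<epsilon>0 by (simp add: mult_le_0_iff)
    then show ?thesis unfolding z_def by simp
  qed
  have "h \<noteq> (\<lambda>_. 0)"
  proof
    assume "h = (\<lambda>_. 0)"
    then have "ip_norm ip h = 0" using ipn_zero_iff[OF hH] by simp
    then show False using lower d0 by simp
  qed
  then show ?thesis using hH orth by blast
qed

end

lemma halfplane_open: "open (halfplane \<rho>)"
  unfolding halfplane_def by (rule open_halfspace_Re_gt)
lemma halfplane_conn: "connected (halfplane \<rho>)"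
  unfolding halfplane_def by blast

lemma real_summ:
  assumes conv: "kernel_converges \<rho> a" and st: "\<sigma> > \<rho>" "\<tau> > \<rho>"
  shows "summable (\<lambda>i. a (Suc i) * real (Suc i) powr (-(\<sigma>+\<tau>)))"
proof -
  have "of_real \<sigma> \<in> halfplane \<rho>" "(of_real \<tau> :: complex) \<in> halfplane \<rho>"
    using st by (auto simp: halfplane_def)
  then have "summable (\<lambda>n. of_real (a (Suc n)) * of_nat (Suc n) powr (- (of_real \<sigma> + cnj (of_real \<tau>))) :: complex)"
    using conv unfolding kernel_converges_def by blast
  also have "(\<lambda>n. of_real (a (Suc n)) * of_nat (Suc n) powr (- (of_real \<sigma> + cnj (of_real \<tau>))) :: complex)
    = (\<lambda>n. of_real (a (Suc n) * real (Suc n) powr (-(\<sigma>+\<tau>))))"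
  proof
    fix n
    have "- (of_real \<sigma> + cnj (of_real \<tau>)) = (of_real (-(\<sigma>+\<tau>)) :: complex)" by simp
    then show "of_real (a (Suc n)) * of_nat (Suc n) powr (- (of_real \<sigma> + cnj (of_real \<tau>))) =
        (of_real (a (Suc n) * real (Suc n) powr (-(\<sigma>+\<tau>))) :: complex)"
      by (simp only: cpow_real[of "Suc n"]) simp
  qed
  finally show ?thesis by (simp only: summable_of_real_iff)
qed

lemma cball_half:
  assumes x: "x \<in> halfplane \<rho>"
  shows "(Re x - \<rho>)/2 > 0" "cball x ((Re x - \<rho>)/2) \<subseteq> halfplane \<rho>"
    "\<And>z. z \<in> cball x ((Re x - \<rho>)/2) \<Longrightarrow> Re z \<ge> Re x - (Re x - \<rho>)/2"
proof -
  show "(Re x - \<rho>)/2 > 0" using x by (simp add: halfplane_def)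
  have *: "Re z \<ge> Re x - (Re x - \<rho>)/2" if "z \<in> cball x ((Re x - \<rho>)/2)" for z
  proof -
    have "\<bar>Re (x - z)\<bar> \<le> cmod (x - z)" by (rule abs_Re_le_cmod)
    also have "\<dots> \<le> (Re x - \<rho>)/2" using that by (simp add: dist_norm)
    finally have "Re (x - z) \<le> (Re x - \<rho>)/2" by (rule abs_le_D1)
    then show ?thesis by (simp add: field_simps)
  qed
  then show "\<And>z. z \<in> cball x ((Re x - \<rho>)/2) \<Longrightarrow> Re z \<ge> Re x - (Re x - \<rho>)/2" .
  show "cball x ((Re x - \<rho>)/2) \<subseteq> halfplane \<rho>"
  proof
    fix z assume "z \<in> cball x ((Re x - \<rho>)/2)"
    then have "Re z \<ge> Re x - (Re x - \<rho>)/2" by (rule *)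
    then show "z \<in> halfplane \<rho>" using x by (simp add: halfplane_def field_simps)
  qed
qed

lemma kernel_holo:
  assumes nonneg: "\<forall>n\<ge>1. a n \<ge> 0" and conv: "kernel_converges \<rho> a" and t: "t \<in> halfplane \<rho>"
  shows "(\<lambda>s. dkernel a s t) holomorphic_on halfplane \<rho>"
proof -
  define T where "T i s = of_real (a (Suc i)) * of_nat (Suc i) powr (-(s + cnj t))" for i s
  show ?thesis
  proof (rule holomorphic_uniform_sequence[where f = "\<lambda>n s. \<Sum>i<n. T i s"])
    show "open (halfplane \<rho>)" by (rule halfplane_open)
    show "(\<lambda>s. \<Sum>i<n. T i s) holomorphic_on halfplane \<rho>" for n
      unfolding T_def by (intro holomorphic_intros)
    fix x assume x: "x \<in> halfplane \<rho>"
    define d where "d = (Re x - \<rho>)/2"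
    define \<sigma>1 where "\<sigma>1 = Re x - d"
    have d0: "d > 0" and sub: "cball x d \<subseteq> halfplane \<rho>" and re: "\<And>z. z \<in> cball x d \<Longrightarrow> Re z \<ge> \<sigma>1"
      using cball_half[OF x] unfolding d_def \<sigma>1_def by auto
    have \<sigma>1: "\<sigma>1 > \<rho>"
    proof -
      have "Re x > \<rho>" using x by (simp add: halfplane_def)
      then show ?thesis unfolding \<sigma>1_def d_def by (simp add: field_simps)
    qed
    have tr: "Re t > \<rho>" using t unfolding halfplane_def by simp
    have "uniform_limit (cball x d) (\<lambda>n s. \<Sum>i<n. T i s) (\<lambda>s. suminf (\<lambda>i. T i s)) sequentially"
    proof (rule Weierstrass_m_test)
      show "summable (\<lambda>i. a (Suc i) * real (Suc i) powr (-(\<sigma>1 + Re t)))"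
        by (rule real_summ[OF conv \<sigma>1 tr])
      fix i z assume z: "z \<in> cball x d"
      have an: "a (Suc i) \<ge> 0" using nonneg by simp
      have "norm (T i z) = a (Suc i) * real (Suc i) powr (-(Re z + Re t))"
        unfolding T_def using an by (simp add: norm_mult norm_powr_real_powr)
      also have "\<dots> \<le> a (Suc i) * real (Suc i) powr (-(\<sigma>1 + Re t))"
        using an re[OF z] by (intro mult_left_mono powr_mono) auto
      finally show "norm (T i z) \<le> a (Suc i) * real (Suc i) powr (-(\<sigma>1 + Re t))" .
    qed
    moreover have "(\<lambda>s. suminf (\<lambda>i. T i s)) = (\<lambda>s. dkernel a s t)"
      unfolding T_def dkernel_def by simp
    ultimately show "\<exists>d>0. cball x d \<subseteq> halfplane \<rho> \<and>
        uniform_limit (cball x d) (\<lambda>n s. \<Sum>i<n. T i s) (\<lambda>s. dkernel a s t) sequentially"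
      using d0 sub by auto
  qed
qed

lemma kfun_holo:
  assumes nonneg: "\<forall>n\<ge>1. a n \<ge> 0" and conv: "kernel_converges \<rho> a" and t: "t \<in> halfplane \<rho>"
  shows "kfun \<rho> a t holomorphic_on halfplane \<rho>"
  by (rule holomorphic_transform[OF kernel_holo[OF nonneg conv t]]) (simp add: kfun_def)

lemma dk_diag:
  assumes conv: "kernel_converges \<rho> a" and s: "s \<in> halfplane \<rho>"
  shows "dkernel a s s = of_real (\<Sum>i. a (Suc i) * real (Suc i) powr (-(Re s + Re s)))"
proof -
  have sr: "Re s > \<rho>" using s unfolding halfplane_def by simp
  have sm: "summable (\<lambda>i. a (Suc i) * real (Suc i) powr (-(Re s + Re s)))"
    by (rule real_summ[OF conv sr sr])
  have eq: "(\<lambda>i. of_real (a (Suc i)) * of_nat (Suc i) powr (- (s + cnj s))) =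
        (\<lambda>i. of_real (a (Suc i) * real (Suc i) powr (-(Re s + Re s))) :: complex)"
  proof
    fix i
    have "- (s + cnj s) = (of_real (-(Re s + Re s)) :: complex)" by (simp add: complex_eq_iff)
    then show "of_real (a (Suc i)) * of_nat (Suc i) powr (- (s + cnj s)) =
        (of_real (a (Suc i) * real (Suc i) powr (-(Re s + Re s))) :: complex)"
      by (simp only: cpow_real[of "Suc i"]) simp
  qed
  show ?thesis unfolding dkernel_def by (subst eq) (rule suminf_of_real[OF sm, symmetric])
qed

lemma diag_le:
  assumes nonneg: "\<forall>n\<ge>1. a n \<ge> 0" and conv: "kernel_converges \<rho> a"
    and s: "s \<in> halfplane \<rho>" and \<sigma>: "\<sigma> > \<rho>" "Re s \<ge> \<sigma>"
  shows "Re (dkernel a s s) \<le> Re (dkernel a (of_real \<sigma>) (of_real \<sigma>))"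
proof -
  have \<sigma>H: "of_real \<sigma> \<in> halfplane \<rho>" using \<sigma> by (simp add: halfplane_def)
  have sr: "Re s > \<rho>" using s unfolding halfplane_def by simp
  have "(\<Sum>i. a (Suc i) * real (Suc i) powr (-(Re s + Re s))) \<le> (\<Sum>i. a (Suc i) * real (Suc i) powr (-(\<sigma> + \<sigma>)))"
  proof (rule suminf_le)
    show "summable (\<lambda>i. a (Suc i) * real (Suc i) powr (-(Re s + Re s)))" by (rule real_summ[OF conv sr sr])
    show "summable (\<lambda>i. a (Suc i) * real (Suc i) powr (-(\<sigma> + \<sigma>)))" by (rule real_summ[OF conv \<sigma>(1) \<sigma>(1)])
    fix i
    have an: "a (Suc i) \<ge> 0" using nonneg by simp
    show "a (Suc i) * real (Suc i) powr (-(Re s + Re s)) \<le> a (Suc i) * real (Suc i) powr (-(\<sigma> + \<sigma>))"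
      using an \<sigma>(2) by (intro mult_left_mono powr_mono) auto
  qed
  then show ?thesis using dk_diag[OF conv s] dk_diag[OF conv \<sigma>H] by simp
qed

lemma rkhs_hfs: "is_rkhs \<rho> a H ip \<Longrightarrow> hfs \<rho> H ip"
  unfolding is_rkhs_def hfs_def by simp

lemma H_holo:
  assumes nonneg: "\<forall>n\<ge>1. a n \<ge> 0" and conv: "kernel_converges \<rho> a"
    and rkhs: "is_rkhs \<rho> a H ip" and fH: "f \<in> H"
  shows "f holomorphic_on halfplane \<rho>"
proof -
  interpret hfs \<rho> H ip by (rule rkhs_hfs[OF rkhs])
  have rep: "\<And>t g. t \<in> halfplane \<rho> \<Longrightarrow> g \<in> H \<Longrightarrow> ip g (kfun \<rho> a t) = g t"
    and kH: "\<And>t. t \<in> halfplane \<rho> \<Longrightarrow> kfun \<rho> a t \<in> H"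
    using rkhs unfolding is_rkhs_def by auto
  define u where "u z = (if z \<in> halfplane \<rho> then z else of_real (\<rho> + 1))" for z
  have uH: "u z \<in> halfplane \<rho>" for z unfolding u_def halfplane_def by auto
  define K where "K z = kfun \<rho> a (u z)" for z
  have KH: "K z \<in> H" for z unfolding K_def using kH uH by blast
  have dense: "\<exists>B c. finite B \<and> ip_norm ip (\<lambda>s. f s - (\<Sum>b\<in>B. c b * K b s)) < e" if e: "e > 0" for e
  proof (rule ccontr)
    assume "\<not> (\<exists>B c. finite B \<and> ip_norm ip (\<lambda>s. f s - (\<Sum>b\<in>B. c b * K b s)) < e)"
    then have far: "\<And>B c. finite B \<Longrightarrow> e \<le> ip_norm ip (\<lambda>s. f s - (\<Sum>b\<in>B. c b * K b s))"
      by (meson not_le)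
    obtain h where hH: "h \<in> H" and h0: "h \<noteq> (\<lambda>_. 0)" and orth: "\<And>i. ip h (K i) = 0"
      using proj[OF KH fH e far] by blast
    have "h t = 0" for t
    proof (cases "t \<in> halfplane \<rho>")
      case True
      then have "h t = ip h (K t)" unfolding K_def u_def using rep hH by simp
      then show ?thesis using orth by simp
    next
      case False then show ?thesis using H_outside hH by blast
    qed
    then show False using h0 by auto
  qed
  have "\<forall>n. \<exists>Bc. finite (fst Bc) \<and> ip_norm ip (\<lambda>s. f s - (\<Sum>b\<in>fst Bc. snd Bc b * K b s)) < inverse (real (Suc n))"
  proof
    fix n
    obtain B c where "finite B" "ip_norm ip (\<lambda>s. f s - (\<Sum>b\<in>B. c b * K b s)) < inverse (real (Suc n))"
      using dense[of "inverse (real (Suc n))"] by auto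
    then show "\<exists>Bc. finite (fst Bc) \<and> ip_norm ip (\<lambda>s. f s - (\<Sum>b\<in>fst Bc. snd Bc b * K b s)) < inverse (real (Suc n))"
      by (intro exI[of _ "(B, c)"]) simp
  qed
  then obtain P where P: "\<And>n. finite (fst (P n))"
    "\<And>n. ip_norm ip (\<lambda>s. f s - (\<Sum>b\<in>fst (P n). snd (P n) b * K b s)) < inverse (real (Suc n))"
    using choice by metis
  define g where "g n = (\<lambda>s. \<Sum>b\<in>fst (P n). snd (P n) b * K b s)" for n
  have gH: "g n \<in> H" for n unfolding g_def by (rule sumK_H[OF KH P(1)])
  have gclose: "ip_norm ip (\<lambda>s. g n s - f s) < inverse (real (Suc n))" for n
    using P(2)[of n] ipn_sym[OF fH gH, of n] unfolding g_def by simp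
  have gholo: "g n holomorphic_on halfplane \<rho>" for n
    unfolding g_def K_def by (intro holomorphic_on_sum holomorphic_on_mult holomorphic_on_const kfun_holo[OF nonneg conv uH])
  show ?thesis
  proof (rule holomorphic_uniform_sequence[of "halfplane \<rho>" g])
    show "open (halfplane \<rho>)" by (rule halfplane_open)
    show "g n holomorphic_on halfplane \<rho>" for n by (rule gholo)
    fix x assume x: "x \<in> halfplane \<rho>"
    define d where "d = (Re x - \<rho>)/2"
    define \<sigma>1 where "\<sigma>1 = Re x - d"
    have d0: "d > 0" and sub: "cball x d \<subseteq> halfplane \<rho>" and re: "\<And>z. z \<in> cball x d \<Longrightarrow> Re z \<ge> \<sigma>1"
      using cball_half[OF x] unfolding d_def \<sigma>1_def by auto
    have \<sigma>1: "\<sigma>1 > \<rho>"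
    proof -
      have "Re x > \<rho>" using x by (simp add: halfplane_def)
      then show ?thesis unfolding \<sigma>1_def d_def by (simp add: field_simps)
    qed
    define M0 where "M0 = Re (dkernel a (of_real \<sigma>1) (of_real \<sigma>1))"
    have kn: "ip_norm ip (kfun \<rho> a z) \<le> sqrt M0" if z: "z \<in> cball x d" for z
    proof -
      have zH: "z \<in> halfplane \<rho>" using sub z by blast
      have "(ip_norm ip (kfun \<rho> a z))^2 = Re (ip (kfun \<rho> a z) (kfun \<rho> a z))"
        by (rule ipn_sq[OF kH[OF zH]])
      also have "\<dots> = Re (dkernel a z z)" using rep[OF zH kH[OF zH]] zH by (simp add: kfun_def)
      also have "\<dots> \<le> M0" unfolding M0_def by (rule diag_le[OF nonneg conv zH \<sigma>1 re[OF z]])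
      finally show ?thesis by (rule real_le_rsqrt)
    qed
    have M0nn: "sqrt M0 \<ge> 0"
    proof -
      have "x \<in> cball x d" using d0 by simp
      then show ?thesis using kn[of x] ipn_nonneg[OF kH[OF x]] by linarith
    qed
    have bound: "cmod (g n z - f z) \<le> inverse (real (Suc n)) * sqrt M0" if z: "z \<in> cball x d" for n z
    proof -
      have zH: "z \<in> halfplane \<rho>" using sub z by blast
      have "g n z - f z = ip (\<lambda>s. g n s - f s) (kfun \<rho> a z)"
        using rep[OF zH H_diff[OF gH fH]] by simp
      then have "cmod (g n z - f z) \<le> ip_norm ip (\<lambda>s. g n s - f s) * ip_norm ip (kfun \<rho> a z)"
        using CS[OF H_diff[OF gH fH] kH[OF zH]] by simp
      also have "\<dots> \<le> inverse (real (Suc n)) * sqrt M0"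
        using gclose[of n] kn[OF z] ipn_nonneg[OF H_diff[OF gH fH]] ipn_nonneg[OF kH[OF zH]]
        by (intro mult_mono) auto
      finally show ?thesis .
    qed
    have "uniform_limit (cball x d) g f sequentially"
    proof (rule uniform_limitI)
      fix \<epsilon> :: real assume \<epsilon>: "\<epsilon> > 0"
      have "sqrt M0 + 1 > 0" using M0nn by linarith
      then have "\<epsilon> / (sqrt M0 + 1) > 0" using \<epsilon> by (rule divide_pos_pos[rotated])
      then obtain N where N: "inverse (real (Suc N)) < \<epsilon> / (sqrt M0 + 1)" using reals_Archimedean by blast
      show "\<forall>\<^sub>F n in sequentially. \<forall>z\<in>cball x d. dist (g n z) (f z) < \<epsilon>"
        unfolding eventually_sequentially
      proof (intro exI allI impI ballI)
        fix n z assume n: "n \<ge> N" and z: "z \<in> cball x d"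
        have "dist (g n z) (f z) \<le> inverse (real (Suc n)) * sqrt M0"
          using bound[OF z] by (simp add: dist_norm)
        also have "\<dots> \<le> inverse (real (Suc N)) * (sqrt M0 + 1)"
          using n M0nn by (intro mult_mono) (auto simp: field_simps)
        also have "\<dots> < \<epsilon>" using N M0nn by (simp add: field_simps)
        finally show "dist (g n z) (f z) < \<epsilon>" .
      qed
    qed
    then show "\<exists>d>0. cball x d \<subseteq> halfplane \<rho> \<and> uniform_limit (cball x d) g f sequentially"
      using d0 sub by blast
  qed
qed

theorem corollary5p6:
  fixes \<rho> :: real and a :: "nat \<Rightarrow> real"
    and H :: "(complex \<Rightarrow> complex) set"
    and ip :: "(complex \<Rightarrow> complex) \<Rightarrow> (complex \<Rightarrow> complex) \<Rightarrow> complex"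
  assumes nonneg: "\<forall>n\<ge>1. a n \<ge> 0"
    and adm: "admissible a"
    and conv: "kernel_converges \<rho> a"
    and rkhs: "is_rkhs \<rho> a H ip"
    and alpha: "\<alpha> > \<rho>"
  shows "(\<forall>B c. finite B \<longrightarrow>
            (\<lambda>s. \<Sum>b\<in>B. c b * kfun \<rho> a (Complex \<alpha> b) s) = (\<lambda>_. 0) \<longrightarrow>
            (\<forall>b\<in>B. c b = 0))
       \<and> (\<forall>f\<in>H. \<forall>e>0. \<exists>B c. finite B \<and>
            ip_norm ip (\<lambda>s. f s - (\<Sum>b\<in>B. c b * kfun \<rho> a (Complex \<alpha> b) s)) < e)"
proof -
  interpret hfs \<rho> H ip by (rule rkhs_hfs[OF rkhs])
  have rep: "\<And>t g. t \<in> halfplane \<rho> \<Longrightarrow> g \<in> H \<Longrightarrow> ip g (kfun \<rho> a t) = g t"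
    and kH: "\<And>t. t \<in> halfplane \<rho> \<Longrightarrow> kfun \<rho> a t \<in> H"
    using rkhs unfolding is_rkhs_def by auto
  have lineH: "Complex \<alpha> b \<in> halfplane \<rho>" for b using alpha by (simp add: halfplane_def)
  have part1: "\<forall>B c. finite B \<longrightarrow>
            (\<lambda>s. \<Sum>b\<in>B. c b * kfun \<rho> a (Complex \<alpha> b) s) = (\<lambda>_. 0) \<longrightarrow>
            (\<forall>b\<in>B. c b = 0)"
    using lin_indep[OF nonneg adm conv alpha] by blast
  have part2: "\<forall>f\<in>H. \<forall>e>0. \<exists>B c. finite B \<and>
            ip_norm ip (\<lambda>s. f s - (\<Sum>b\<in>B. c b * kfun \<rho> a (Complex \<alpha> b) s)) < e"
  proof (intro ballI allI impI)
    fix f and e :: real assume fH: "f \<in> H" and e: "e > 0"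
    define K where "K b = kfun \<rho> a (Complex \<alpha> b)" for b
    have KH: "K b \<in> H" for b unfolding K_def by (rule kH[OF lineH])
    show "\<exists>B c. finite B \<and> ip_norm ip (\<lambda>s. f s - (\<Sum>b\<in>B. c b * kfun \<rho> a (Complex \<alpha> b) s)) < e"
    proof (rule ccontr)
      assume "\<not> (\<exists>B c. finite B \<and> ip_norm ip (\<lambda>s. f s - (\<Sum>b\<in>B. c b * kfun \<rho> a (Complex \<alpha> b) s)) < e)"
      then have far: "\<And>B c. finite B \<Longrightarrow> e \<le> ip_norm ip (\<lambda>s. f s - (\<Sum>b\<in>B. c b * K b s))"
        unfolding K_def by (meson not_le)
      obtain h where hH: "h \<in> H" and h0: "h \<noteq> (\<lambda>_. 0)" and orth: "\<And>i. ip h (K i) = 0"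
        using proj[OF KH fH e far] by blast
      have hh: "h holomorphic_on halfplane \<rho>" by (rule H_holo[OF nonneg conv rkhs hH])
      have hz: "h z = 0" if "z \<in> range (Complex \<alpha>)" for z
      proof -
        obtain b where z: "z = Complex \<alpha> b" using \<open>z \<in> range (Complex \<alpha>)\<close> by blast
        have "h z = ip h (K b)" unfolding z K_def using rep[OF lineH hH] by simp
        then show ?thesis using orth by simp
      qed
      have lim: "Complex \<alpha> 0 islimpt range (Complex \<alpha>)"
        unfolding islimpt_approachable
      proof (intro allI impI)
        fix \<epsilon> :: real assume \<epsilon>: "\<epsilon> > 0"
        have "Complex \<alpha> (\<epsilon>/2) - Complex \<alpha> 0 = Complex 0 (\<epsilon>/2)" by (simp add: complex_eq_iff)
        then have "dist (Complex \<alpha> (\<epsilon>/2)) (Complex \<alpha> 0) = \<epsilon>/2"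
          using \<epsilon> by (simp add: dist_norm cmod_def)
        then show "\<exists>x'\<in>range (Complex \<alpha>). x' \<noteq> Complex \<alpha> 0 \<and> dist x' (Complex \<alpha> 0) < \<epsilon>"
          using \<epsilon> by (intro bexI[of _ "Complex \<alpha> (\<epsilon>/2)"]) auto
      qed
      have "h w = 0" for w
      proof (cases "w \<in> halfplane \<rho>")
        case True
        show ?thesis
          by (rule analytic_continuation[OF hh halfplane_open halfplane_conn _ lineH lim hz True])
             (use lineH in auto)
      next
        case False then show ?thesis using H_outside hH by blast
      qed
      then show False using h0 by auto
    qed
  qed
  show ?thesis using part1 part2 by blast
qed

end
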